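(* Let $n,m\in\mathbb{N}$ and let $f:\mathbb{F}_2^n\to\mathbb{F}_2$ be $m$-bent. Run algorithm $\mathbb{A}^{(m)}(\mathrm{H}^{\otimes n})$ with $g=f$ and measure all $2n$ qubits. Then the probability of observing $\ket{0^n}\ket{0^n}$ is $2^{-n}$, and for every $\mathbf{x}\neq 0^n$ the probability of observing $\ket{\mathbf{x}}\ket{0^n}$ is $0$.
   Context: $\zeta_m=e^{2\pi i/m}$, $\overline{\zeta_m}$ its conjugate; $wt$ is Hamming weight; $\mathbf{x}\cdot\mathbf{y}=\bigoplus_i x_iy_i$. $f$ is $m$-bent if $|\mathcal{H}^{(m)}_f(\boldsymbol{\omega})|=1$ for all $\boldsymbol{\omega}$, where $\mathcal{H}^{(m)}_f(\boldsymbol{\omega})=2^{-n/2}\sum_{\mathbf{x}}(-1)^{f(\mathbf{x})\oplus\mathbf{x}\cdot\boldsymbol{\omega}}\zeta_m^{wt(\mathbf{x})}$. Gates: $\mathrm{H}$ Hadamard; $\Omega_m=\frac{1}{\sqrt2}\begin{pmatrix}1&\zeta_m\\1&-\zeta_m\end{pmatrix}$; $\overline{\Omega}_m=\frac{1}{\sqrt2}\begin{pmatrix}1&\overline{\zeta_m}\\1&-\overline{\zeta_m}\end{pmatrix}$; $U_f$ is the phase oracle $\ket{\mathbf{x}}\mapsto(-1)^{f(\mathbf{x})}\ket{\mathbf{x}}$. Algorithm $\mathbb{A}^{(m)}(\mathrm{C}_n)$ (with functions $f,g$): two $n$-qubit registers start in $\ket{0^n}\ket{0^n}$; apply $\mathrm{C}_n$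 to the first register; then apply to the second register in order $\mathrm{H}^{\otimes n}$, $U_f$, $\Omega_m^{\otimes n}$, then the two-register gate $\ket{\mathbf{y}}\ket{\mathbf{x}}\mapsto(-1)^{\mathbf{x}\cdot\mathbf{y}}\ket{\mathbf{y}}\ket{\mathbf{x}}$, then $\mathrm{H}^{\otimes n}$, $U_g$, $\overline{\Omega}_m^{\otimes n}$ on the second register; finally measure both registers. *)

theory Defs
  imports "HOL-Analysis.Analysis"
begin

text \<open>n-bit strings are boolean lists of length n (True = 1). A one-register state is a
  function from bit strings to complex amplitudes; a two-register state is curried:
  first register, then second register.\<close>

definition bitvecs :: "nat \<Rightarrow> bool list set" where
  "bitvecs n = {xs. length xs = n}"

definition zeros :: "nat \<Rightarrow> bool list" where
  "zeros n = replicate n False"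

definition wt :: "bool list \<Rightarrow> nat" where
  "wt xs = length (filter id xs)"

definition dotp :: "bool list \<Rightarrow> bool list \<Rightarrow> bool" where
  "dotp xs ys = odd (length (filter id (map2 (\<and>) xs ys)))"

definition sgn1 :: "bool \<Rightarrow> complex" where
  "sgn1 b = (if b then -1 else 1)"

definition zeta :: "nat \<Rightarrow> complex" where
  "zeta m = cis (2 * pi / real m)"

definition Hm :: "nat \<Rightarrow> nat \<Rightarrow> (bool list \<Rightarrow> bool) \<Rightarrow> bool list \<Rightarrow> complex" where
  "Hm n m f \<omega> = (1 / sqrt (2 ^ n)) *
     (\<Sum>x\<in>bitvecs n. sgn1 (f x \<noteq> dotp x \<omega>) * zeta m ^ wt x)"

definition m_bent :: "nat \<Rightarrow> nat \<Rightarrow> (bool list \<Rightarrow> bool) \<Rightarrow> bool" where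
  "m_bent n m f \<longleftrightarrow> (\<forall>\<omega>\<in>bitvecs n. cmod (Hm n m f \<omega>) = 1)"

text \<open>Single-qubit gates as matrices: entry (row, column), index False = 0, True = 1.\<close>
definition Hgate :: "bool \<Rightarrow> bool \<Rightarrow> complex" where
  "Hgate r c = (if r \<and> c then -1 else 1) / complex_of_real (sqrt 2)"

definition Omega :: "nat \<Rightarrow> bool \<Rightarrow> bool \<Rightarrow> complex" where
  "Omega m r c = (if c then (if r then - zeta m else zeta m) else 1) / complex_of_real (sqrt 2)"

definition Omegabar :: "nat \<Rightarrow> bool \<Rightarrow> bool \<Rightarrow> complex" where
  "Omegabar m r c = (if c then (if r then - cnj (zeta m) else cnj (zeta m)) else 1)
                     / complex_of_real (sqrt 2)"

definition tensor_gate :: "nat \<Rightarrow> (bool \<Rightarrow> bool \<Rightarrow> complex) \<Rightarrow>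
    (bool list \<Rightarrow> complex) \<Rightarrow> (bool list \<Rightarrow> complex)" where
  "tensor_gate n U \<psi> = (\<lambda>z. \<Sum>x\<in>bitvecs n. (\<Prod>i<n. U (z ! i) (x ! i)) * \<psi> x)"

definition phase_oracle :: "(bool list \<Rightarrow> bool) \<Rightarrow> (bool list \<Rightarrow> complex) \<Rightarrow> (bool list \<Rightarrow> complex)" where
  "phase_oracle f \<psi> = (\<lambda>x. sgn1 (f x) * \<psi> x)"

definition on_first :: "((bool list \<Rightarrow> complex) \<Rightarrow> (bool list \<Rightarrow> complex)) \<Rightarrow>
    (bool list \<Rightarrow> bool list \<Rightarrow> complex) \<Rightarrow> (bool list \<Rightarrow> bool list \<Rightarrow> complex)" where
  "on_first T \<Psi> = (\<lambda>y x. T (\<lambda>y'. \<Psi> y' x) y)"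

definition on_second :: "((bool list \<Rightarrow> complex) \<Rightarrow> (bool list \<Rightarrow> complex)) \<Rightarrow>
    (bool list \<Rightarrow> bool list \<Rightarrow> complex) \<Rightarrow> (bool list \<Rightarrow> bool list \<Rightarrow> complex)" where
  "on_second T \<Psi> = (\<lambda>y. T (\<Psi> y))"

definition cphase :: "(bool list \<Rightarrow> bool list \<Rightarrow> complex) \<Rightarrow> (bool list \<Rightarrow> bool list \<Rightarrow> complex)" where
  "cphase \<Psi> = (\<lambda>y x. sgn1 (dotp x y) * \<Psi> y x)"

definition alg_state :: "nat \<Rightarrow> nat \<Rightarrow> ((bool list \<Rightarrow> complex) \<Rightarrow> (bool list \<Rightarrow> complex)) \<Rightarrow>
    (bool list \<Rightarrow> bool) \<Rightarrow> (bool list \<Rightarrow> bool) \<Rightarrow> bool list \<Rightarrow> bool list \<Rightarrow> complex" where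
  "alg_state n m C f g =
     (let s0 = (\<lambda>y x. if y = zeros n \<and> x = zeros n then 1 else 0);
          s1 = on_first C s0;
          s2 = on_second (tensor_gate n Hgate) s1;
          s3 = on_second (phase_oracle f) s2;
          s4 = on_second (tensor_gate n (Omega m)) s3;
          s5 = cphase s4;
          s6 = on_second (tensor_gate n Hgate) s5;
          s7 = on_second (phase_oracle g) s6
      in on_second (tensor_gate n (Omegabar m)) s7)"

definition alg_prob :: "nat \<Rightarrow> nat \<Rightarrow> ((bool list \<Rightarrow> complex) \<Rightarrow> (bool list \<Rightarrow> complex)) \<Rightarrow>
    (bool list \<Rightarrow> bool) \<Rightarrow> (bool list \<Rightarrow> bool) \<Rightarrow> bool list \<Rightarrow> bool list \<Rightarrow> real" where
  "alg_prob n m C f g y x = (cmod (alg_state n m C f g y x))\<^sup>2"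

end

theory Submission imports Defs begin

lemma finite_bitvecs[simp]: "finite (bitvecs n)"
proof -
  have "bitvecs n = {xs. set xs \<subseteq> (UNIV::bool set) \<and> length xs = n}"
    by (auto simp: bitvecs_def)
  then show ?thesis using finite_lists_length_eq[of "UNIV::bool set" n] by simp
qed

lemma zeros_in[simp]: "zeros n \<in> bitvecs n"
  by (simp add: zeros_def bitvecs_def)

lemma bitvecs_Suc: "bitvecs (Suc n) = Cons True ` bitvecs n \<union> Cons False ` bitvecs n"
proof (rule set_eqI)
  fix xs show "xs \<in> bitvecs (Suc n) \<longleftrightarrow> xs \<in> Cons True ` bitvecs n \<union> Cons False ` bitvecs n"
    by (cases xs) (auto simp: bitvecs_def)
qed

lemma sum_prod_bitvecs:
  fixes g :: "nat \<Rightarrow> bool \<Rightarrow> 'a::comm_semiring_1"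
  shows "(\<Sum>w\<in>bitvecs n. \<Prod>i<n. g i (w!i)) = (\<Prod>i<n. (g i False + g i True))"
proof (induction n arbitrary: g)
  case 0
  then show ?case by (simp add: bitvecs_def)
next
  case (Suc n)
  have d: "Cons True ` bitvecs n \<inter> Cons False ` bitvecs n = {}" by auto
  have "(\<Sum>w\<in>bitvecs (Suc n). \<Prod>i<Suc n. g i (w!i))
     = (\<Sum>w\<in>bitvecs n. \<Prod>i<Suc n. g i ((True#w)!i)) + (\<Sum>w\<in>bitvecs n. \<Prod>i<Suc n. g i ((False#w)!i))"
    unfolding bitvecs_Suc
    by (subst sum.union_disjoint) (auto simp: d sum.reindex)
  also have "\<dots> = g 0 True * (\<Sum>w\<in>bitvecs n. \<Prod>i<n. g (Suc i) (w!i)) + g 0 False * (\<Sum>w\<in>bitvecs n. \<Prod>i<n. g (Suc i) (w!i))"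
    by (simp only: prod.lessThan_Suc_shift nth_Cons_0 nth_Cons_Suc sum_distrib_left)
  also have "\<dots> = (\<Prod>i<Suc n. (g i False + g i True))"
    using Suc.IH[of "\<lambda>i. g (Suc i)"] by (simp only: prod.lessThan_Suc_shift) (simp add: algebra_simps)
  finally show ?case .
qed

lemma dotp_Cons[simp]: "dotp (a#x) (b#y) = ((a \<and> b) \<noteq> dotp x y)"
  by (auto simp: dotp_def)

lemma dotp_Nil[simp]: "dotp [] y = False" "dotp x [] = False"
  by (simp_all add: dotp_def)

lemma sgn1_neq: "sgn1 (p \<noteq> q) = sgn1 p * sgn1 q"
  by (simp add: sgn1_def)

lemma sgn1_dotp_prod:
  "length x = length y \<Longrightarrow> sgn1 (dotp x y) = (\<Prod>i<length x. if x!i \<and> y!i then -1 else 1)"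
proof (induction x y rule: list_induct2)
  case Nil then show ?case by (simp add: sgn1_def)
next
  case (Cons a x b y)
  then show ?case by (simp only: length_Cons prod.lessThan_Suc_shift nth_Cons_0 nth_Cons_Suc dotp_Cons sgn1_neq) (simp add: sgn1_def)
qed

lemma dotp_comm: "dotp x y = dotp y x"
proof (induction x arbitrary: y)
  case Nil then show ?case by simp
next
  case (Cons a x) then show ?case by (cases y) auto
qed

lemma dotp_zeros[simp]: "dotp x (zeros n) = False"
proof (induction x arbitrary: n)
  case Nil then show ?case by simp
next
  case (Cons a x) then show ?case by (cases n) (auto simp: zeros_def)
qed

lemma wt_prod: "z ^ wt x = (\<Prod>i<length x. if x!i then z else 1)"
  by (induction x) (auto simp: wt_def prod.lessThan_Suc_shift simp del: prod.lessThan_Suc)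

definition "sq = complex_of_real (1 / sqrt 2)"

lemma Hprod: "length a = n \<Longrightarrow> length b = n \<Longrightarrow>
  (\<Prod>i<n. Hgate (a!i) (b!i)) = sq ^ n * sgn1 (dotp a b)"
proof -
  assume a: "length a = n" "length b = n"
  have "(\<Prod>i<n. Hgate (a!i) (b!i)) = (\<Prod>i<n. sq * (if a!i \<and> b!i then -1 else 1))"
    by (rule prod.cong) (auto simp: Hgate_def sq_def)
  then show ?thesis using a by (simp add: prod.distrib sgn1_dotp_prod)
qed

lemma Oprod: "length a = n \<Longrightarrow> length b = n \<Longrightarrow>
  (\<Prod>i<n. Omega m (a!i) (b!i)) = sq ^ n * zeta m ^ wt b * sgn1 (dotp a b)"
proof -
  assume a: "length a = n" "length b = n"
  have "(\<Prod>i<n. Omega m (a!i) (b!i)) = (\<Prod>i<n. sq * (if b!i then zeta m else 1) * (if a!i \<and> b!i then -1 else 1))"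
    by (rule prod.cong) (auto simp: Omega_def sq_def)
  then show ?thesis using a by (simp add: prod.distrib sgn1_dotp_prod wt_prod)
qed

lemma Obprod: "length a = n \<Longrightarrow> length b = n \<Longrightarrow>
  (\<Prod>i<n. Omegabar m (a!i) (b!i)) = sq ^ n * cnj (zeta m) ^ wt b * sgn1 (dotp a b)"
proof -
  assume a: "length a = n" "length b = n"
  have "(\<Prod>i<n. Omegabar m (a!i) (b!i)) = (\<Prod>i<n. sq * (if b!i then cnj (zeta m) else 1) * (if a!i \<and> b!i then -1 else 1))"
    by (rule prod.cong) (auto simp: Omegabar_def sq_def)
  then show ?thesis using a by (simp add: prod.distrib sgn1_dotp_prod wt_prod)
qed

lemma charsum: "length a = n \<Longrightarrow> (\<Sum>w\<in>bitvecs n. sgn1 (dotp w a)) = (if a = zeros n then 2 ^ n else 0)"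
proof -
  assume a: "length a = n"
  have "(\<Sum>w\<in>bitvecs n. sgn1 (dotp w a)) = (\<Sum>w\<in>bitvecs n. \<Prod>i<n. (\<lambda>i c. if c \<and> a!i then -1 else (1::complex)) i (w!i))"
    by (rule sum.cong) (auto simp: sgn1_dotp_prod a bitvecs_def)
  also have "\<dots> = (\<Prod>i<n. (if a!i then 0 else 2))"
    by (subst sum_prod_bitvecs) (rule prod.cong, auto)
  also have "\<dots> = (if a = zeros n then 2 ^ n else 0)"
  proof (cases "a = zeros n")
    case True then show ?thesis by (simp add: zeros_def)
  next
    case False
    then obtain i where "i < n" "a!i" using a
      by (metis (full_types) length_replicate nth_equalityI nth_replicate zeros_def)
    then show ?thesis using False by (auto intro: prod_zero)
  qed
  finally show ?thesis .
qed


lemma sq_pow: "sq ^ n = complex_of_real (1 / sqrt (2 ^ n))"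
  by (simp add: sq_def real_sqrt_power power_divide)

lemma sq_sq: "sq * sq = 1/2"
proof -
  have r: "(1/sqrt 2::real) * (1/sqrt 2) = 1/2" by simp
  have "sq * sq = complex_of_real ((1/sqrt 2) * (1/sqrt 2))" unfolding sq_def of_real_mult ..
  then show ?thesis using r by simp
qed

lemma zeros_nth: "i < n \<Longrightarrow> zeros n ! i = False"
  by (simp add: zeros_def)

lemma step1: "on_first (tensor_gate n Hgate) (\<lambda>y x. if y = zeros n \<and> x = zeros n then 1 else 0) y
   = (\<lambda>x. if x = zeros n then sq ^ n else 0)"
proof
  fix x
  have p: "(\<Prod>i<n. Hgate (y!i) (zeros n ! i)) = sq ^ n"
    by (simp add: zeros_nth Hgate_def sq_def)
  show "on_first (tensor_gate n Hgate) (\<lambda>y x. if y = zeros n \<and> x = zeros n then 1 else 0) y x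
     = (if x = zeros n then sq ^ n else 0)"
    unfolding on_first_def tensor_gate_def
    by (simp add: p if_distrib[of "\<lambda>t. _ * t"] sum.delta' cong: if_cong)
qed

lemma step2: "tensor_gate n Hgate (\<lambda>x. if x = zeros n then sq ^ n else 0) = (\<lambda>z. sq ^ n * sq ^ n)"
proof
  fix z
  have p: "(\<Prod>i<n. Hgate (z!i) (zeros n ! i)) = sq ^ n"
    by (simp add: zeros_nth Hgate_def sq_def)
  show "tensor_gate n Hgate (\<lambda>x. if x = zeros n then sq ^ n else 0) z = sq ^ n * sq ^ n"
    unfolding tensor_gate_def
    by (simp add: p if_distrib[of "\<lambda>t. _ * t"] sum.delta' cong: if_cong)
qed

lemma step4: "w \<in> bitvecs n \<Longrightarrow> tensor_gate n (Omega m) (phase_oracle f (\<lambda>z. c)) w = c * Hm n m f w"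
proof -
  assume w: "w \<in> bitvecs n"
  have "tensor_gate n (Omega m) (phase_oracle f (\<lambda>z. c)) w
     = (\<Sum>x\<in>bitvecs n. (sq ^ n * zeta m ^ wt x * sgn1 (dotp w x)) * (sgn1 (f x) * c))"
    unfolding tensor_gate_def phase_oracle_def
    by (rule sum.cong) (use w in \<open>auto simp: Oprod bitvecs_def\<close>)
  also have "\<dots> = c * Hm n m f w"
    unfolding Hm_def sq_pow[symmetric] sgn1_neq
    by (simp add: sum_distrib_left dotp_comm mult_ac)
  finally show ?thesis .
qed

lemma cnj_sgn1[simp]: "cnj (sgn1 b) = sgn1 b"
  by (simp add: sgn1_def)

lemma cnj_Hm: "cnj (Hm n m f w) = sq ^ n * (\<Sum>v\<in>bitvecs n. sgn1 (f v \<noteq> dotp v w) * cnj (zeta m) ^ wt v)"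
  unfolding Hm_def sq_pow sgn1_neq by simp


lemma len_zeros[simp]: "length (zeros n) = n" by (simp add: zeros_def)

lemma final_amp:
  assumes y: "y \<in> bitvecs n" and bent: "m_bent n m f"
  shows "alg_state n m (tensor_gate n Hgate) f f y (zeros n) = sq^n * sq^n * sq^n * (if y = zeros n then 2^n else 0)"
proof -
  define c where "c = sq^n * sq^n"
  define B where "B = bitvecs n"
  have "alg_state n m (tensor_gate n Hgate) f f y (zeros n) = tensor_gate n (Omegabar m) (phase_oracle f (tensor_gate n Hgate
      (\<lambda>w. sgn1 (dotp w y) * tensor_gate n (Omega m) (phase_oracle f (\<lambda>z. c)) w))) (zeros n)"
    by (simp add: alg_state_def Let_def on_second_def cphase_def step1 step2 c_def)
  also have "\<dots> = (\<Sum>v\<in>B. (sq^n * cnj (zeta m) ^ wt v) * (sgn1 (f v) *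
       (\<Sum>w\<in>B. (sq^n * sgn1 (dotp v w)) * (sgn1 (dotp w y) * (c * Hm n m f w)))))"
    unfolding tensor_gate_def[of n Hgate] tensor_gate_def[of n "Omegabar m"] phase_oracle_def B_def
    apply (intro sum.cong refl arg_cong2[where f=times])
      apply (simp add: Obprod bitvecs_def dotp_comm[of "zeros n"] sgn1_def)
     apply (simp add: Hprod bitvecs_def)
    apply (simp add: step4[unfolded phase_oracle_def])
    done
  also have "\<dots> = (\<Sum>v\<in>B. \<Sum>w\<in>B. c * sq^n * sgn1 (dotp w y) * Hm n m f w * (sq^n * (sgn1 (f v) * sgn1 (dotp v w) * cnj (zeta m) ^ wt v)))"
    by (simp add: sum_distrib_left mult_ac)
  also have "\<dots> = (\<Sum>w\<in>B. \<Sum>v\<in>B. c * sq^n * sgn1 (dotp w y) * Hm n m f w * (sq^n * (sgn1 (f v) * sgn1 (dotp v w) * cnj (zeta m) ^ wt v)))"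
    by (rule sum.swap)
  also have "\<dots> = (\<Sum>w\<in>B. c * sq^n * sgn1 (dotp w y) * (Hm n m f w * cnj (Hm n m f w)))"
    unfolding cnj_Hm sgn1_neq B_def
    by (simp add: sum_distrib_left mult_ac)
  also have "\<dots> = (\<Sum>w\<in>B. c * sq^n * sgn1 (dotp w y))"
  proof (rule sum.cong[OF refl])
    fix w assume "w \<in> B"
    then have "cmod (Hm n m f w) = 1" using bent by (simp add: m_bent_def B_def)
    then have "Hm n m f w * cnj (Hm n m f w) = 1"
      using complex_norm_square[of "Hm n m f w"] by simp
    then show "c * sq^n * sgn1 (dotp w y) * (Hm n m f w * cnj (Hm n m f w)) = c * sq^n * sgn1 (dotp w y)"
      by simp
  qed
  also have "\<dots> = c * sq^n * (if y = zeros n then 2^n else 0)"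
  proof -
    have ly: "length y = n" using y by (simp add: bitvecs_def)
    show ?thesis using charsum[OF ly] by (simp add: sum_distrib_left[symmetric] B_def)
  qed
  finally show ?thesis by (simp add: c_def)
qed

theorem corollary4:
  fixes n m :: nat and f :: "bool list \<Rightarrow> bool"
  assumes "0 < m"
    and "m_bent n m f"
  shows "alg_prob n m (tensor_gate n Hgate) f f (zeros n) (zeros n) = 1 / 2 ^ n \<and>
         (\<forall>x\<in>bitvecs n. x \<noteq> zeros n \<longrightarrow>
           alg_prob n m (tensor_gate n Hgate) f f x (zeros n) = 0)"
proof
  have "sq^n * sq^n * sq^n * 2^n = sq ^ n"
  proof -
    have "sq^n * sq^n * 2^n = (sq * sq * 2)^n" by (simp add: power_mult_distrib)
    also have "\<dots> = 1" by (simp add: sq_sq)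
    finally show ?thesis by (simp add: mult_ac)
  qed
  then have "alg_state n m (tensor_gate n Hgate) f f (zeros n) (zeros n) = sq ^ n"
    using final_amp[OF zeros_in assms(2)] by simp
  moreover have "(cmod (sq ^ n))^2 = 1 / 2^n"
    by (simp add: sq_pow norm_divide power_divide)
  ultimately show "alg_prob n m (tensor_gate n Hgate) f f (zeros n) (zeros n) = 1 / 2 ^ n"
    unfolding alg_prob_def by simp
next
  show "\<forall>x\<in>bitvecs n. x \<noteq> zeros n \<longrightarrow> alg_prob n m (tensor_gate n Hgate) f f x (zeros n) = 0"
    unfolding alg_prob_def using final_amp[OF _ assms(2)] by simp
qed

end
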